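(* Let $A\in\mathcal{T}$ and let $\beta^A_{k,n}$ ($k\in\mathbb{Z}$, $n\in\mathbb{Z}_+$) be the coefficients of its series representation, i.e. the $k$-th Fourier coefficient $A_k$ of $\pi^{-1}(A)$ equals $T_{-k,0}\sum_n\beta^A_{k,n}T_{n,n}$ if $k\le0$ and $\big(\sum_n\beta^A_{k,n}T_{n,n}\big)T_{0,k}$ if $k>0$. Then $A$ is compact if and only if $\sum_{n=0}^\infty\beta^A_{k,n}=0$ for every $k\in\mathbb{Z}$.
   Context: Let $\ell^2(\mathbb{Z}_+)$ have orthonormal basis $(e_n)_{n\ge0}$, let $T$ be the unilateral shift $Te_n=e_{n+1}$, and let $\mathcal{T}$ be the norm-closed subalgebra of $B(\ell^2(\mathbb{Z}_+))$ generated by $T$ and $T^*$. For $n,m\in\mathbb{Z}_+$ put $T_{n,m}=T^n(T^* )^m$. $\widetilde{T}_{n,m}\in C(S^1,\mathcal{T})$ is $\widetilde{T}_{n,m}(e^{i\theta})=e^{i(m-n)\theta}T_{n,m}$, $\widetilde{\mathcal{T}}$ is the closed subalgebra of $C(S^1,\mathcal{T})$ (sup norm) generated by them, and $\pi:\widetilde{\mathcal{T}}\to\mathcal{T}$, $\pi(F)=F(1)$, is a *-isomorphism. The $k$-th Fourier coefficient of $F$ is $\frac{1}{2\pi}\int_0^{2\pi}F(e^{i\theta})e^{-ik\theta}d\theta$. Each such coefficient $A_k$ of $\pi^{-1}(A)$ has the displayed form with strongly convergent inner series and $\sum_n\beta^A_{k,n}$ convergent. *)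

theory Defs
  imports "HOL-Analysis.Analysis"
begin

text \<open>Concrete model of l^2(Z_+): vectors are complex sequences indexed by nat;
  operators are maps on such sequences, only their behaviour on l2 matters.\<close>

type_synonym vec = "nat \<Rightarrow> complex"
type_synonym oper = "vec \<Rightarrow> vec"

definition l2 :: "vec set" where
  "l2 = {x. summable (\<lambda>n. (cmod (x n))\<^sup>2)}"

definition l2norm :: "vec \<Rightarrow> real" where
  "l2norm x = sqrt (\<Sum>n. (cmod (x n))\<^sup>2)"

definition vdiff :: "vec \<Rightarrow> vec \<Rightarrow> vec" where
  "vdiff x y = (\<lambda>i. x i - y i)"

definition l2_tendsto :: "(nat \<Rightarrow> vec) \<Rightarrow> vec \<Rightarrow> bool" where
  "l2_tendsto s y \<longleftrightarrow> y \<in> l2 \<and> (\<forall>N. s N \<in> l2) \<and>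
     (\<lambda>N. l2norm (vdiff (s N) y)) \<longlonglongrightarrow> 0"

definition op_add :: "oper \<Rightarrow> oper \<Rightarrow> oper" where
  "op_add A B = (\<lambda>x i. A x i + B x i)"

definition op_diff :: "oper \<Rightarrow> oper \<Rightarrow> oper" where
  "op_diff A B = (\<lambda>x i. A x i - B x i)"

definition op_scale :: "complex \<Rightarrow> oper \<Rightarrow> oper" where
  "op_scale c A = (\<lambda>x i. c * A x i)"

definition bounded_op :: "oper \<Rightarrow> bool" where
  "bounded_op A \<longleftrightarrow>
     (\<forall>x\<in>l2. A x \<in> l2) \<and>
     (\<forall>x\<in>l2. \<forall>y\<in>l2. \<forall>a b. A (\<lambda>i. a * x i + b * y i) = (\<lambda>i. a * A x i + b * A y i)) \<and>
     (\<exists>C. \<forall>x\<in>l2. l2norm (A x) \<le> C * l2norm x)"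

definition opnorm :: "oper \<Rightarrow> real" where
  "opnorm A = Sup {l2norm (A x) | x. x \<in> l2 \<and> l2norm x \<le> 1}"

definition compact_op :: "oper \<Rightarrow> bool" where
  "compact_op A \<longleftrightarrow> bounded_op A \<and>
     (\<forall>xs. (\<forall>j. xs j \<in> l2) \<and> (\<exists>M. \<forall>j. l2norm (xs j) \<le> M) \<longrightarrow>
        (\<exists>(r::nat \<Rightarrow> nat) y. strict_mono r \<and> l2_tendsto (\<lambda>j. A (xs (r j))) y))"

definition shift :: oper where
  "shift x = (\<lambda>n. if n = 0 then 0 else x (n - 1))"

definition shift_adj :: oper where
  "shift_adj x = (\<lambda>n. x (Suc n))"

definition Tnm :: "nat \<Rightarrow> nat \<Rightarrow> oper" where
  "Tnm n m = (shift ^^ n) \<circ> (shift_adj ^^ m)"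

inductive_set toep_gen :: "oper set" where
  gen_T: "shift \<in> toep_gen"
| gen_Tadj: "shift_adj \<in> toep_gen"
| gen_add: "A \<in> toep_gen \<Longrightarrow> B \<in> toep_gen \<Longrightarrow> op_add A B \<in> toep_gen"
| gen_scale: "A \<in> toep_gen \<Longrightarrow> op_scale c A \<in> toep_gen"
| gen_mult: "A \<in> toep_gen \<Longrightarrow> B \<in> toep_gen \<Longrightarrow> A \<circ> B \<in> toep_gen"

definition toeplitz :: "oper set" where
  "toeplitz = {A. bounded_op A \<and> (\<forall>e>0. \<exists>B\<in>toep_gen. opnorm (op_diff A B) < e)}"

text \<open>Functions on S^1 are parametrised by theta (value at e^(i theta)).
  T~_(n,m)(e^(i theta)) = e^(i(m-n)theta) T_(n,m).\<close>
definition Ttil :: "nat \<Rightarrow> nat \<Rightarrow> real \<Rightarrow> oper" where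
  "Ttil n m \<theta> = op_scale (exp (\<i> * of_real ((real m - real n) * \<theta>))) (Tnm n m)"

inductive_set toep_til_gen :: "(real \<Rightarrow> oper) set" where
  tgen_basic: "Ttil n m \<in> toep_til_gen"
| tgen_add: "F \<in> toep_til_gen \<Longrightarrow> G \<in> toep_til_gen \<Longrightarrow> (\<lambda>\<theta>. op_add (F \<theta>) (G \<theta>)) \<in> toep_til_gen"
| tgen_scale: "F \<in> toep_til_gen \<Longrightarrow> (\<lambda>\<theta>. op_scale c (F \<theta>)) \<in> toep_til_gen"
| tgen_mult: "F \<in> toep_til_gen \<Longrightarrow> G \<in> toep_til_gen \<Longrightarrow> (\<lambda>\<theta>. F \<theta> \<circ> G \<theta>) \<in> toep_til_gen"

definition C_circle_toep :: "(real \<Rightarrow> oper) set" where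
  "C_circle_toep = {F. (\<forall>\<theta>. F \<theta> \<in> toeplitz) \<and>
     (\<forall>\<theta> x. x \<in> l2 \<longrightarrow> F (\<theta> + 2 * pi) x = F \<theta> x) \<and>
     (\<forall>\<theta>. \<forall>e>0. \<exists>d>0. \<forall>\<theta>'. \<bar>\<theta>' - \<theta>\<bar> < d \<longrightarrow> opnorm (op_diff (F \<theta>') (F \<theta>)) < e)}"

definition toep_til :: "(real \<Rightarrow> oper) set" where
  "toep_til = {F. F \<in> C_circle_toep \<and>
     (\<forall>e>0. \<exists>G\<in>toep_til_gen. \<forall>\<theta>. opnorm (op_diff (F \<theta>) (G \<theta>)) < e)}"

definition fourier_coeff :: "(real \<Rightarrow> oper) \<Rightarrow> int \<Rightarrow> oper" where
  "fourier_coeff F k x = (\<lambda>i. complex_of_real (1 / (2 * pi)) *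
     integral {0..2 * pi} (\<lambda>\<theta>. F \<theta> x i * exp (- \<i> * of_real (real_of_int k * \<theta>))))"

definition series_form :: "(nat \<Rightarrow> complex) \<Rightarrow> int \<Rightarrow> oper \<Rightarrow> bool" where
  "series_form b k Ak \<longleftrightarrow> (\<forall>x\<in>l2.
     (if k \<le> 0 then
        (\<exists>y. l2_tendsto (\<lambda>N i. \<Sum>n<N. b n * Tnm n n x i) y \<and> Ak x = Tnm (nat (- k)) 0 y)
      else
        l2_tendsto (\<lambda>N i. \<Sum>n<N. b n * Tnm n n (Tnm 0 (nat k) x) i) (Ak x)))"

text \<open>beta are the coefficients of the series representation of A: the Fourier
  coefficients of pi^(-1)(A) (the element F of T~ with F(1) = A) have the series form.\<close>
definition series_coeffs :: "oper \<Rightarrow> (int \<Rightarrow> nat \<Rightarrow> complex) \<Rightarrow> bool" where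
  "series_coeffs A \<beta> \<longleftrightarrow> (\<exists>F. F \<in> toep_til \<and> (\<forall>x\<in>l2. F 0 x = A x) \<and>
     (\<forall>k. series_form (\<beta> k) k (fourier_coeff F k)))"

end

theory Submission
  imports Defs "HOL-Library.Diagonal_Subsequence"
begin


definition ev :: "nat \<Rightarrow> vec" where "ev j = (\<lambda>i. if i = j then 1 else 0)"

lemma L2_eq: "L2_set (\<lambda>i. cmod (x i)) S = sqrt (\<Sum>i\<in>S. (cmod (x i))\<^sup>2)"
  by (simp add: L2_set_def)

lemma l2_leI:
  assumes "\<And>N. L2_set (\<lambda>i. cmod (x i)) {..<N} \<le> C"
  shows "x \<in> l2" "l2norm x \<le> C"
proof -
  have C0: "0 \<le> C" using assms[of 0] by simp
  have b: "(\<Sum>i<N. (cmod (x i))\<^sup>2) \<le> C\<^sup>2" for N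
  proof -
    have "sqrt (\<Sum>i<N. (cmod (x i))\<^sup>2) \<le> C" using assms[of N] by (simp add: L2_eq)
    then show ?thesis by (rule sqrt_le_D)
  qed
  have s: "summable (\<lambda>n. (cmod (x n))\<^sup>2)"
    by (rule summableI_nonneg_bounded[where x="C\<^sup>2"]) (use b in auto)
  then show "x \<in> l2" by (simp add: l2_def)
  have "(\<Sum>n. (cmod (x n))\<^sup>2) \<le> C\<^sup>2" using suminf_le_const[OF s b] .
  then show "l2norm x \<le> C" unfolding l2norm_def using C0 real_sqrt_le_mono by fastforce
qed

lemma l2norm_nonneg: assumes "x \<in> l2" shows "0 \<le> l2norm x"
proof -
  have s: "summable (\<lambda>n. (cmod (x n))\<^sup>2)" using assms by (simp add: l2_def)
  show ?thesis unfolding l2norm_def by (rule real_sqrt_ge_zero, rule suminf_nonneg[OF s]) auto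
qed

lemma l2_sum_le:
  assumes "x \<in> l2" "finite S"
  shows "(\<Sum>i\<in>S. (cmod (x i))\<^sup>2) \<le> (l2norm x)\<^sup>2"
proof -
  have s: "summable (\<lambda>n. (cmod (x n))\<^sup>2)" using assms by (simp add: l2_def)
  have "(\<Sum>i\<in>S. (cmod (x i))\<^sup>2) \<le> (\<Sum>n. (cmod (x n))\<^sup>2)"
    by (rule sum_le_suminf[OF s assms(2)]) auto
  moreover have "(\<Sum>n. (cmod (x n))\<^sup>2) \<ge> 0" by (rule suminf_nonneg[OF s]) auto
  ultimately show ?thesis by (simp add: l2norm_def)
qed

lemma l2_L2_le:
  assumes "x \<in> l2" "finite S"
  shows "L2_set (\<lambda>i. cmod (x i)) S \<le> l2norm x"
proof -
  have "sqrt (\<Sum>i\<in>S. (cmod (x i))\<^sup>2) \<le> sqrt ((l2norm x)\<^sup>2)"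
    by (rule real_sqrt_le_mono[OF l2_sum_le[OF assms]])
  then show ?thesis by (simp add: L2_eq l2norm_nonneg[OF assms(1)])
qed

lemma coord_le: assumes "x \<in> l2" shows "cmod (x i) \<le> l2norm x"
proof -
  have "L2_set (\<lambda>i. cmod (x i)) {i} \<le> l2norm x" by (rule l2_L2_le[OF assms]) auto
  then show ?thesis by (simp add: L2_eq)
qed

lemma l2_add:
  assumes "x \<in> l2" "y \<in> l2"
  shows "(\<lambda>i. x i + y i) \<in> l2" "l2norm (\<lambda>i. x i + y i) \<le> l2norm x + l2norm y"
proof -
  have B: "L2_set (\<lambda>i. cmod (x i + y i)) {..<N} \<le> l2norm x + l2norm y" for N
  proof -
    have "L2_set (\<lambda>i. cmod (x i + y i)) {..<N} \<le> L2_set (\<lambda>i. cmod (x i) + cmod (y i)) {..<N}"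
      by (rule L2_set_mono) (auto intro: norm_triangle_ineq)
    also have "\<dots> \<le> L2_set (\<lambda>i. cmod (x i)) {..<N} + L2_set (\<lambda>i. cmod (y i)) {..<N}"
      by (rule L2_set_triangle_ineq)
    also have "\<dots> \<le> l2norm x + l2norm y"
      using l2_L2_le[OF assms(1)] l2_L2_le[OF assms(2)] by (intro add_mono) auto
    finally show ?thesis .
  qed
  then show "(\<lambda>i. x i + y i) \<in> l2" "l2norm (\<lambda>i. x i + y i) \<le> l2norm x + l2norm y"
    using l2_leI[of "\<lambda>i. x i + y i", OF B] by blast+
qed

lemma l2_scale:
  assumes "x \<in> l2"
  shows "(\<lambda>i. c * x i) \<in> l2" "l2norm (\<lambda>i. c * x i) = cmod c * l2norm x"
proof -
  have s: "summable (\<lambda>n. (cmod (x n))\<^sup>2)" using assms by (simp add: l2_def)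
  have e: "(\<lambda>n. (cmod (c * x n))\<^sup>2) = (\<lambda>n. (cmod c)\<^sup>2 * (cmod (x n))\<^sup>2)"
    by (simp add: norm_mult power_mult_distrib)
  show "(\<lambda>i. c * x i) \<in> l2" unfolding l2_def mem_Collect_eq e by (rule summable_mult[OF s])
  have "(\<Sum>n. (cmod c)\<^sup>2 * (cmod (x n))\<^sup>2) = (cmod c)\<^sup>2 * (\<Sum>n. (cmod (x n))\<^sup>2)"
    using suminf_mult[OF s] by simp
  then show "l2norm (\<lambda>i. c * x i) = cmod c * l2norm x"
    unfolding l2norm_def e by (simp add: real_sqrt_mult)
qed

lemma l2_diff:
  assumes "x \<in> l2" "y \<in> l2"
  shows "(\<lambda>i. x i - y i) \<in> l2" "l2norm (\<lambda>i. x i - y i) \<le> l2norm x + l2norm y"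
proof -
  have m: "(\<lambda>i. - y i) \<in> l2" "l2norm (\<lambda>i. - y i) = l2norm y"
    using l2_scale[OF assms(2), of "-1"] by auto
  have "(\<lambda>i. x i + - y i) \<in> l2" "l2norm (\<lambda>i. x i + - y i) \<le> l2norm x + l2norm (\<lambda>i. - y i)"
    using l2_add[OF assms(1) m(1)] by auto
  then show "(\<lambda>i. x i - y i) \<in> l2" "l2norm (\<lambda>i. x i - y i) \<le> l2norm x + l2norm y"
    using m(2) by auto
qed

lemma l2_zero: "(\<lambda>i. 0) \<in> l2" "l2norm (\<lambda>i. 0) = 0"
  by (simp_all add: l2_def l2norm_def)

lemma ev_l2: "ev j \<in> l2" "l2norm (ev j) = 1"
proof -
  have f: "(\<lambda>i. (cmod (ev j i))\<^sup>2) = (\<lambda>i. if i = j then 1 else 0)" by (auto simp: ev_def)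
  have "L2_set (\<lambda>i. cmod (ev j i)) {..<N} \<le> 1" for N
    unfolding L2_eq f by (simp add: sum.delta')
  then have E: "ev j \<in> l2" "l2norm (ev j) \<le> 1" using l2_leI by blast+
  then show "ev j \<in> l2" by simp
  have "1 \<le> l2norm (ev j)" using coord_le[OF \<open>ev j \<in> l2\<close>, of j] by (simp add: ev_def)
  then show "l2norm (ev j) = 1" using \<open>l2norm (ev j) \<le> 1\<close> by simp
qed

lemma l2norm_zero_iff: assumes "x \<in> l2" "l2norm x = 0" shows "x i = 0"
  using coord_le[OF assms(1), of i] assms(2) by simp


lemma bop_l2: "bounded_op A \<Longrightarrow> x \<in> l2 \<Longrightarrow> A x \<in> l2"
  by (simp add: bounded_op_def)

lemma bop_lin: "bounded_op A \<Longrightarrow> x \<in> l2 \<Longrightarrow> y \<in> l2 \<Longrightarrow>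
   A (\<lambda>i. a * x i + b * y i) = (\<lambda>i. a * A x i + b * A y i)"
  by (simp add: bounded_op_def)

lemma bop_zero: assumes "bounded_op A" shows "A (\<lambda>i. 0) = (\<lambda>i. 0)"
  using bop_lin[OF assms l2_zero(1) l2_zero(1), of 0 0] by simp

lemma bop_scale: assumes "bounded_op A" "x \<in> l2" shows "A (\<lambda>i. c * x i) = (\<lambda>i. c * A x i)"
  using bop_lin[OF assms(1) assms(2) assms(2), of c 0] by simp

lemma bop_add: assumes "bounded_op A" "x \<in> l2" "y \<in> l2" shows "A (\<lambda>i. x i + y i) = (\<lambda>i. A x i + A y i)"
  using bop_lin[OF assms, of 1 1] by simp

lemma bop_diff: assumes "bounded_op A" "x \<in> l2" "y \<in> l2" shows "A (\<lambda>i. x i - y i) = (\<lambda>i. A x i - A y i)"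
  using bop_lin[OF assms, of 1 "-1"] by simp

lemma opnorm_bound:
  assumes "bounded_op D" "x \<in> l2"
  shows "l2norm (D x) \<le> opnorm D * l2norm x"
proof -
  let ?S = "{l2norm (D x) | x. x \<in> l2 \<and> l2norm x \<le> 1}"
  obtain C where C: "\<And>x. x \<in> l2 \<Longrightarrow> l2norm (D x) \<le> C * l2norm x"
    using assms(1) unfolding bounded_op_def by blast
  have bdd: "bdd_above ?S"
  proof (rule bdd_aboveI[where M="max C 0"])
    fix t assume "t \<in> ?S"
    then obtain z where z: "z \<in> l2" "l2norm z \<le> 1" "t = l2norm (D z)" by blast
    have "C * l2norm z \<le> max C 0"
    proof (cases "C \<ge> 0")
      case True then show ?thesis using z(2) l2norm_nonneg[OF z(1)] by (simp add: mult_le_one mult_left_le)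
    next
      case False then show ?thesis using l2norm_nonneg[OF z(1)]
        by (simp add: mult_nonpos_nonneg)
    qed
    then show "t \<le> max C 0" using C[OF z(1)] z(3) by simp
  qed
  show ?thesis
  proof (cases "l2norm x = 0")
    case True
    then have "x = (\<lambda>i. 0)" using l2norm_zero_iff[OF assms(2)] by auto
    then have "D x = (\<lambda>i. 0)" using bop_zero[OF assms(1)] by simp
    then show ?thesis using True l2_zero by simp
  next
    case False
    define n where "n = l2norm x"
    have n0: "n > 0" using False l2norm_nonneg[OF assms(2)] unfolding n_def by simp
    define x' where "x' = (\<lambda>i. complex_of_real (1/n) * x i)"
    have x'l2: "x' \<in> l2" unfolding x'_def by (rule l2_scale(1)[OF assms(2)])
    have nx': "l2norm x' = 1" unfolding x'_def l2_scale(2)[OF assms(2)] n_def[symmetric]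
      using n0 by (simp add: norm_divide abs_of_pos)
    have Dx': "D x' = (\<lambda>i. complex_of_real (1/n) * D x i)"
      unfolding x'_def by (rule bop_scale[OF assms])
    have "l2norm (D x') \<le> opnorm D" unfolding opnorm_def
      by (rule cSup_upper[OF _ bdd]) (use x'l2 nx' in auto)
    moreover have "l2norm (D x') = (1/n) * l2norm (D x)"
      unfolding Dx' l2_scale(2)[OF bop_l2[OF assms]] using n0 by (simp add: norm_divide abs_of_pos)
    ultimately have "l2norm (D x) \<le> n * opnorm D" using n0 by (simp add: field_simps)
    then show ?thesis unfolding n_def by (simp add: mult.commute)
  qed
qed

lemma opnorm_lt:
  assumes "bounded_op D" "opnorm D < e" "x \<in> l2"
  shows "l2norm (D x) \<le> e * l2norm x"
  using opnorm_bound[OF assms(1,3)] assms(2) l2norm_nonneg[OF assms(3)]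
  by (meson le_less_trans less_eq_real_def mult_right_mono order_trans)

lemma bop_opadd: assumes "bounded_op A" "bounded_op B" shows "bounded_op (op_add A B)"
proof -
  obtain CA where CA: "\<And>x. x \<in> l2 \<Longrightarrow> l2norm (A x) \<le> CA * l2norm x"
    using assms(1) unfolding bounded_op_def by blast
  obtain CB where CB: "\<And>x. x \<in> l2 \<Longrightarrow> l2norm (B x) \<le> CB * l2norm x"
    using assms(2) unfolding bounded_op_def by blast
  show ?thesis unfolding bounded_op_def
  proof (intro conjI ballI allI)
    fix x assume x: "x \<in> l2"
    show "op_add A B x \<in> l2" unfolding op_add_def by (rule l2_add(1)[OF bop_l2[OF assms(1) x] bop_l2[OF assms(2) x]])
  next
    fix x y a b assume x: "x \<in> l2" and y: "y \<in> l2"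
    show "op_add A B (\<lambda>i. a * x i + b * y i) = (\<lambda>i. a * op_add A B x i + b * op_add A B y i)"
      unfolding op_add_def bop_lin[OF assms(1) x y] bop_lin[OF assms(2) x y] by (simp add: algebra_simps)
  next
    show "\<exists>C. \<forall>x\<in>l2. l2norm (op_add A B x) \<le> C * l2norm x"
    proof (intro exI ballI)
      fix x assume x: "x \<in> l2"
      have "l2norm (op_add A B x) \<le> l2norm (A x) + l2norm (B x)"
        unfolding op_add_def by (rule l2_add(2)[OF bop_l2[OF assms(1) x] bop_l2[OF assms(2) x]])
      also have "\<dots> \<le> (CA + CB) * l2norm x" using CA[OF x] CB[OF x] by (simp add: algebra_simps)
      finally show "l2norm (op_add A B x) \<le> (CA + CB) * l2norm x" .
    qed
  qed
qed

lemma bop_opscale: assumes "bounded_op A" shows "bounded_op (op_scale c A)"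
proof -
  obtain CA where CA: "\<And>x. x \<in> l2 \<Longrightarrow> l2norm (A x) \<le> CA * l2norm x"
    using assms(1) unfolding bounded_op_def by blast
  show ?thesis unfolding bounded_op_def
  proof (intro conjI ballI allI)
    fix x assume x: "x \<in> l2"
    show "op_scale c A x \<in> l2" unfolding op_scale_def by (rule l2_scale(1)[OF bop_l2[OF assms(1) x]])
  next
    fix x y a b assume x: "x \<in> l2" and y: "y \<in> l2"
    show "op_scale c A (\<lambda>i. a * x i + b * y i) = (\<lambda>i. a * op_scale c A x i + b * op_scale c A y i)"
      unfolding op_scale_def bop_lin[OF assms(1) x y] by (simp add: algebra_simps)
  next
    show "\<exists>C. \<forall>x\<in>l2. l2norm (op_scale c A x) \<le> C * l2norm x"
    proof (intro exI ballI)
      fix x assume x: "x \<in> l2"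
      have "l2norm (op_scale c A x) = cmod c * l2norm (A x)"
        unfolding op_scale_def by (rule l2_scale(2)[OF bop_l2[OF assms(1) x]])
      also have "\<dots> \<le> (cmod c * CA) * l2norm x" using mult_left_mono[OF CA[OF x] norm_ge_zero[of c]] by (simp add: mult.assoc)
      finally show "l2norm (op_scale c A x) \<le> (cmod c * CA) * l2norm x" .
    qed
  qed
qed

lemma op_diff_eq: "op_diff A B = op_add A (op_scale (-1) B)"
  by (simp add: op_diff_def op_add_def op_scale_def fun_eq_iff)

lemma bop_opdiff: assumes "bounded_op A" "bounded_op B" shows "bounded_op (op_diff A B)"
  unfolding op_diff_eq by (intro bop_opadd bop_opscale assms)

lemma approx_bound:
  assumes "bounded_op A" "bounded_op B" "opnorm (op_diff A B) < e" "x \<in> l2"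
  shows "l2norm (\<lambda>i. A x i - B x i) \<le> e * l2norm x"
  using opnorm_lt[OF bop_opdiff[OF assms(1,2)] assms(3,4)] by (simp add: op_diff_def)

lemma approx_coord:
  assumes "bounded_op A" "bounded_op B" "opnorm (op_diff A B) < e" "x \<in> l2"
  shows "cmod (A x i - B x i) \<le> e * l2norm x"
proof -
  have "(\<lambda>i. A x i - B x i) \<in> l2" by (rule l2_diff(1)) (use assms bop_l2 in auto)
  then show ?thesis using coord_le[of "\<lambda>i. A x i - B x i" i] approx_bound[OF assms] by simp
qed


section \<open>Finite combinations of T_(a,b)\<close>

definition tm :: "complex \<times> nat \<times> nat \<Rightarrow> oper" where
  "tm t x i = (case t of (c,a,b) \<Rightarrow> c * (if a \<le> i then x (i + b - a) else 0))"

definition tp :: "(complex \<times> nat \<times> nat) list \<Rightarrow> oper" where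
  "tp L x i = (\<Sum>t\<leftarrow>L. tm t x i)"

definition comb :: "complex \<times> nat \<times> nat \<Rightarrow> complex \<times> nat \<times> nat \<Rightarrow> complex \<times> nat \<times> nat" where
  "comb t1 t2 = (case t1 of (c1,a1,b1) \<Rightarrow> case t2 of (c2,a2,b2) \<Rightarrow> (c1*c2, a1 + (a2 - b1), b2 + (b1 - a2)))"

definition prodL where "prodL L1 L2 = concat (map (\<lambda>t1. map (comb t1) L2) L1)"

lemma tp_Nil[simp]: "tp [] x i = 0" by (simp add: tp_def)
lemma tp_Cons[simp]: "tp (t#L) x i = tm t x i + tp L x i" by (simp add: tp_def)

lemma tp_append: "tp (L1 @ L2) = op_add (tp L1) (tp L2)"
  by (simp add: tp_def op_add_def fun_eq_iff)

lemma tp_scale: "op_scale c (tp L) = tp (map (\<lambda>(c',a,b). (c*c',a,b)) L)"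
proof -
  have "c * tp L x i = tp (map (\<lambda>(c',a,b). (c*c',a,b)) L) x i" for x i
    by (induction L) (auto simp: tm_def algebra_simps)
  then show ?thesis by (simp add: op_scale_def fun_eq_iff)
qed

lemma tm_comp: "tm t1 (tm t2 x) i = tm (comb t1 t2) x i"
proof -
  obtain c1 a1 b1 where t1: "t1 = (c1,a1,b1)" by (cases t1) auto
  obtain c2 a2 b2 where t2: "t2 = (c2,a2,b2)" by (cases t2) auto
  show ?thesis unfolding t1 t2 tm_def comb_def
    by (cases "a1 \<le> i"; cases "a2 \<le> b1"; cases "a2 \<le> i + b1 - a1") (auto simp: algebra_simps)
qed

lemma tm_add: "tm t (\<lambda>k. x k + y k) i = tm t x i + tm t y i"
  by (cases t) (auto simp: tm_def algebra_simps)

lemma tm_sum: "tm t (\<lambda>k. \<Sum>s\<leftarrow>L. f s k) i = (\<Sum>s\<leftarrow>L. tm t (f s) i)"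
proof (induction L)
  case Nil then show ?case by (cases t) (simp add: tm_def)
next
  case (Cons s L) then show ?case by (simp add: tm_add)
qed

lemma tp_comp: "tp L1 \<circ> tp L2 = tp (prodL L1 L2)"
proof -
  have "tp L1 (tp L2 x) i = tp (prodL L1 L2) x i" for x i
  proof (induction L1)
    case Nil then show ?case by (simp add: prodL_def)
  next
    case (Cons t L1)
    have "tm t (tp L2 x) i = (\<Sum>s\<leftarrow>L2. tm (comb t s) x i)"
      unfolding tp_def tm_sum by (simp add: tm_comp)
    moreover have "tp (prodL (t#L1) L2) x i = tp (map (comb t) L2) x i + tp (prodL L1 L2) x i"
      by (simp add: prodL_def tp_def)
    moreover have "tp (map (comb t) L2) x i = (\<Sum>s\<leftarrow>L2. tm (comb t s) x i)"
      by (simp add: tp_def o_def)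
    ultimately show ?case using Cons by simp
  qed
  then show ?thesis by (simp add: fun_eq_iff)
qed

lemma tp_lin_scale: "tp L (\<lambda>k. c * x k) i = c * tp L x i"
  by (induction L) (auto simp: tm_def algebra_simps)

lemma shift_pow: "(shift ^^ n) x i = (if n \<le> i then x (i - n) else 0)"
  by (induction n arbitrary: i) (auto simp: shift_def)

lemma shift_adj_pow: "(shift_adj ^^ m) x i = x (i + m)"
  by (induction m arbitrary: i) (auto simp: shift_adj_def)

lemma Tnm_eq: "Tnm n m x i = (if n \<le> i then x (i - n + m) else 0)"
  by (simp add: Tnm_def shift_pow shift_adj_pow)

lemma Tnm_tp: "Tnm n m = tp [(1,n,m)]"
  by (auto simp: fun_eq_iff Tnm_eq tm_def)

lemma toep_gen_tp: "B \<in> toep_gen \<Longrightarrow> \<exists>L. B = tp L"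
proof (induction rule: toep_gen.induct)
  case gen_T
  have "shift = tp [(1,1,0)]" by (auto simp: fun_eq_iff shift_def tm_def)
  then show ?case by blast
next
  case gen_Tadj
  have "shift_adj = tp [(1,0,1)]" by (auto simp: fun_eq_iff shift_adj_def tm_def)
  then show ?case by blast
next
  case (gen_add A B) then show ?case using tp_append by metis
next
  case (gen_scale A c) then show ?case using tp_scale by metis
next
  case (gen_mult A B) then show ?case using tp_comp by metis
qed

lemma toep_til_gen_tp: "G \<in> toep_til_gen \<Longrightarrow> \<exists>L. G \<theta> = tp L"
proof (induction rule: toep_til_gen.induct)
  case (tgen_basic n m)
  have "Ttil n m \<theta> = op_scale (exp (\<i> * of_real ((real m - real n) * \<theta>))) (tp [(1,n,m)])"
    by (simp add: Ttil_def Tnm_tp)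
  then show ?case using tp_scale by metis
next
  case (tgen_add F G) then show ?case using tp_append by metis
next
  case (tgen_scale F c) then show ?case using tp_scale by metis
next
  case (tgen_mult F G) then show ?case using tp_comp by metis
qed

lemma Tnm_l2:
  assumes "x \<in> l2"
  shows "Tnm a b x \<in> l2" "l2norm (Tnm a b x) \<le> l2norm x"
proof -
  have "L2_set (\<lambda>i. cmod (Tnm a b x i)) {..<N} \<le> l2norm x" for N
  proof -
    have "(\<Sum>i<N. (cmod (Tnm a b x i))\<^sup>2) = (\<Sum>i\<in>{a..<N}. (cmod (x (i - a + b)))\<^sup>2)"
      by (rule sum.mono_neutral_cong_right) (auto simp: Tnm_eq)
    also have "\<dots> = (\<Sum>k\<in>(\<lambda>i. i - a + b) ` {a..<N}. (cmod (x k))\<^sup>2)"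
      by (rule sum.reindex[symmetric, unfolded o_def]) (auto simp: inj_on_def)
    also have "\<dots> \<le> (l2norm x)\<^sup>2" by (rule l2_sum_le[OF assms]) auto
    finally have "sqrt (\<Sum>i<N. (cmod (Tnm a b x i))\<^sup>2) \<le> sqrt ((l2norm x)\<^sup>2)"
      by (rule real_sqrt_le_mono)
    then show ?thesis by (simp add: L2_eq l2norm_nonneg[OF assms])
  qed
  then show "Tnm a b x \<in> l2" "l2norm (Tnm a b x) \<le> l2norm x" using l2_leI by blast+
qed

lemma bop_Tnm: "bounded_op (Tnm a b)"
  unfolding bounded_op_def
proof (intro conjI ballI allI)
  fix x assume "x \<in> l2" then show "Tnm a b x \<in> l2" by (rule Tnm_l2)
next
  fix x y :: vec and c d :: complex
  show "Tnm a b (\<lambda>i. c * x i + d * y i) = (\<lambda>i. c * Tnm a b x i + d * Tnm a b y i)"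
    by (auto simp: fun_eq_iff Tnm_eq)
next
  show "\<exists>C. \<forall>x\<in>l2. l2norm (Tnm a b x) \<le> C * l2norm x"
    by (rule exI[of _ 1]) (use Tnm_l2 in auto)
qed

lemma tm_eq_scale: "tm (c,a,b) = op_scale c (Tnm a b)"
  by (auto simp: fun_eq_iff tm_def op_scale_def Tnm_eq)

lemma bop_tp: "bounded_op (tp L)"
proof (induction L)
  case Nil
  have e: "tp [] = (\<lambda>x i. 0)" by (simp add: fun_eq_iff)
  show ?case unfolding e bounded_op_def using l2_zero by (auto intro: exI[of _ 0])
next
  case (Cons t L)
  obtain c a b where t: "t = (c,a,b)" by (cases t) auto
  have e: "tp (t#L) = op_add (tm t) (tp L)" by (simp add: fun_eq_iff op_add_def)
  show ?case unfolding e unfolding t tm_eq_scale by (intro bop_opadd bop_opscale bop_Tnm Cons)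
qed


section \<open>Gauge action and Fourier coefficients\<close>

lemma exp_cancel: "exp (\<i> * c) * (exp (- (\<i> * c)) * z) = z"
  by (simp add: exp_minus)

lemma gauge:
  assumes "G \<in> toep_til_gen"
  shows "G \<theta> x i = exp (- (\<i> * of_real (real i * \<theta>))) * G 0 (\<lambda>k. exp (\<i> * of_real (real k * \<theta>)) * x k) i"
  using assms
proof (induction arbitrary: x i rule: toep_til_gen.induct)
  case (tgen_basic n m)
  show ?case
  proof (cases "n \<le> i")
    case True
    have e: "- (\<i> * of_real (real i * \<theta>)) + \<i> * of_real (real (i - n + m) * \<theta>) =
        \<i> * of_real ((real m - real n) * \<theta>)"
      using True by (simp add: of_nat_diff algebra_simps)
    have h: "exp (- (\<i> * of_real (real i * \<theta>))) * exp (\<i> * of_real (real (i - n + m) * \<theta>)) =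
        exp (\<i> * of_real ((real m - real n) * \<theta>))"
      by (simp only: mult_exp_exp e)
    have "Ttil n m \<theta> x i = exp (\<i> * of_real ((real m - real n) * \<theta>)) * x (i - n + m)"
      using True by (simp add: Ttil_def op_scale_def Tnm_eq)
    also have "\<dots> = (exp (- (\<i> * of_real (real i * \<theta>))) * exp (\<i> * of_real (real (i - n + m) * \<theta>))) * x (i - n + m)"
      by (simp only: h)
    also have "\<dots> = exp (- (\<i> * of_real (real i * \<theta>))) * (exp (\<i> * of_real (real (i - n + m) * \<theta>)) * x (i - n + m))"
      by (simp only: mult.assoc)
    also have "\<dots> = exp (- (\<i> * of_real (real i * \<theta>))) * Ttil n m 0 (\<lambda>k. exp (\<i> * of_real (real k * \<theta>)) * x k) i"
      using True by (simp add: Ttil_def op_scale_def Tnm_eq)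
    finally show ?thesis .
  next
    case False then show ?thesis by (simp add: Ttil_def op_scale_def Tnm_eq)
  qed
next
  case (tgen_add F G)
  then show ?case by (simp add: op_add_def algebra_simps)
next
  case (tgen_scale F c)
  then show ?case by (simp add: op_scale_def algebra_simps)
next
  case (tgen_mult F G)
  have e: "(\<lambda>k. exp (\<i> * of_real (real k * \<theta>)) * G \<theta> x k) =
      G 0 (\<lambda>k. exp (\<i> * of_real (real k * \<theta>)) * x k)"
    by (subst tgen_mult.IH(2)) (simp add: exp_cancel)
  have "F \<theta> (G \<theta> x) i = exp (- (\<i> * of_real (real i * \<theta>))) * F 0 (\<lambda>k. exp (\<i> * of_real (real k * \<theta>)) * G \<theta> x k) i"
    by (rule tgen_mult.IH(1))
  also have "\<dots> = exp (- (\<i> * of_real (real i * \<theta>))) * F 0 (G 0 (\<lambda>k. exp (\<i> * of_real (real k * \<theta>)) * x k)) i"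
    by (simp only: e)
  finally show ?case by simp
qed

lemma small_zero: assumes "\<And>e. e > 0 \<Longrightarrow> cmod z \<le> 2 * e" shows "z = 0"
proof (rule ccontr)
  assume "z \<noteq> 0"
  then have "cmod z > 0" by simp
  then show False using assms[of "cmod z / 4"] by simp
qed

lemma toep_til_entry:
  assumes F: "F \<in> toep_til"
  shows "F \<theta> (ev j) i = exp (\<i> * of_real ((real j - real i) * \<theta>)) * F 0 (ev j) i"
proof -
  let ?E = "exp (\<i> * of_real ((real j - real i) * \<theta>))"
  have bF: "bounded_op (F t)" for t using F unfolding toep_til_def C_circle_toep_def toeplitz_def by blast
  have "cmod (F \<theta> (ev j) i - ?E * F 0 (ev j) i) \<le> 2 * e" if e: "e > 0" for e
  proof -
    obtain G where G: "G \<in> toep_til_gen" "\<And>t. opnorm (op_diff (F t) (G t)) < e"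
      using F e unfolding toep_til_def by blast
    obtain L where L: "G 0 = tp L" using toep_til_gen_tp[OF G(1)] by blast
    have bG: "bounded_op (G t)" for t using toep_til_gen_tp[OF G(1), of t] bop_tp by auto
    have d1: "cmod (F \<theta> (ev j) i - G \<theta> (ev j) i) \<le> e"
      using approx_coord[OF bF bG G(2) ev_l2(1)] ev_l2(2) by simp
    have d0: "cmod (F 0 (ev j) i - G 0 (ev j) i) \<le> e"
      using approx_coord[OF bF bG G(2) ev_l2(1)] ev_l2(2) by simp
    have f: "(\<lambda>k. exp (\<i> * of_real (real k * \<theta>)) * ev j k) = (\<lambda>k. exp (\<i> * of_real (real j * \<theta>)) * ev j k)"
      by (auto simp: ev_def)
    have "G \<theta> (ev j) i = exp (- (\<i> * of_real (real i * \<theta>))) * (exp (\<i> * of_real (real j * \<theta>)) * G 0 (ev j) i)"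
      unfolding gauge[OF G(1), of \<theta>] f unfolding L tp_lin_scale ..
    also have "\<dots> = (exp (- (\<i> * of_real (real i * \<theta>))) * exp (\<i> * of_real (real j * \<theta>))) * G 0 (ev j) i"
      by (simp only: mult.assoc)
    also have "exp (- (\<i> * of_real (real i * \<theta>))) * exp (\<i> * of_real (real j * \<theta>)) = ?E"
    proof -
      have "- (\<i> * of_real (real i * \<theta>)) + \<i> * of_real (real j * \<theta>) = \<i> * of_real ((real j - real i) * \<theta>)"
        by (simp add: algebra_simps)
      then show ?thesis by (simp only: mult_exp_exp)
    qed
    finally have Gt: "G \<theta> (ev j) i = ?E * G 0 (ev j) i" .
    have "F \<theta> (ev j) i - ?E * F 0 (ev j) i = (F \<theta> (ev j) i - G \<theta> (ev j) i) + ?E * (G 0 (ev j) i - F 0 (ev j) i)"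
      unfolding Gt by (simp add: algebra_simps)
    also have "cmod \<dots> \<le> cmod (F \<theta> (ev j) i - G \<theta> (ev j) i) + cmod (?E * (G 0 (ev j) i - F 0 (ev j) i))"
      by (rule norm_triangle_ineq)
    also have "\<dots> \<le> e + e"
      using d1 d0 by (simp add: norm_mult norm_minus_commute)
    finally show ?thesis by simp
  qed
  then show ?thesis using small_zero[of "F \<theta> (ev j) i - ?E * F 0 (ev j) i"] by simp
qed

lemma integral_exp_int:
  "integral {0..2*pi} (\<lambda>\<theta>. exp (\<i> * of_real (real_of_int n * \<theta>))) = (if n = 0 then complex_of_real (2*pi) else 0)"
proof (cases "n = 0")
  case True
  then show ?thesis by (simp add: scaleR_conv_of_real)
next
  case False
  define f where "f = (\<lambda>z::complex. exp (\<i> * of_int n * z) / (\<i> * of_int n))"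
  have d: "(f has_field_derivative exp (\<i> * of_int n * z)) (at z)" for z
    unfolding f_def using False by (auto intro!: derivative_eq_intros)
  have "((\<lambda>\<theta>. exp (\<i> * of_real (real_of_int n * \<theta>))) has_integral (f (of_real (2*pi)) - f (of_real 0))) {0..2*pi}"
  proof (rule fundamental_theorem_of_calculus)
    fix x :: real assume "x \<in> {0..2*pi}"
    have "((\<lambda>x. f (of_real x)) has_vector_derivative exp (\<i> * of_int n * of_real x)) (at x within {0..2*pi})"
      by (rule has_vector_derivative_real_field[OF d])
    then show "((\<lambda>x. f (of_real x)) has_vector_derivative exp (\<i> * of_real (real_of_int n * x))) (at x within {0..2*pi})"
      by (simp add: mult.assoc)
  qed simp
  moreover have "f (of_real (2*pi)) - f (of_real 0) = 0"
  proof -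
    have "exp (\<i> * of_int n * of_real (2*pi)) = 1"
      using exp_2pi_1_int[of n] by (simp add: algebra_simps)
    then show ?thesis unfolding f_def by simp
  qed
  ultimately show ?thesis using False by (simp add: integral_unique)
qed

lemma fourier_entry:
  assumes F: "F \<in> toep_til"
  shows "fourier_coeff F k (ev j) i = (if int j - int i = k then F 0 (ev j) i else 0)"
proof -
  let ?a = "F 0 (ev j) i"
  have e: "F \<theta> (ev j) i * exp (- \<i> * of_real (real_of_int k * \<theta>)) =
      ?a * exp (\<i> * of_real (real_of_int (int j - int i - k) * \<theta>))" for \<theta>
  proof -
    have x: "\<i> * of_real ((real j - real i) * \<theta>) + - \<i> * of_real (real_of_int k * \<theta>) =
        \<i> * of_real (real_of_int (int j - int i - k) * \<theta>)"
      by (simp add: algebra_simps)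
    have "F \<theta> (ev j) i * exp (- \<i> * of_real (real_of_int k * \<theta>)) =
      ?a * (exp (\<i> * of_real ((real j - real i) * \<theta>)) * exp (- \<i> * of_real (real_of_int k * \<theta>)))"
      unfolding toep_til_entry[OF F, of \<theta> j i] by (simp only: ac_simps)
    also have "\<dots> = ?a * exp (\<i> * of_real (real_of_int (int j - int i - k) * \<theta>))"
      by (simp only: mult_exp_exp x)
    finally show ?thesis .
  qed
  have "fourier_coeff F k (ev j) i = complex_of_real (1 / (2 * pi)) *
      integral {0..2*pi} (\<lambda>\<theta>. ?a * exp (\<i> * of_real (real_of_int (int j - int i - k) * \<theta>)))"
    by (simp only: fourier_coeff_def e)
  also have "\<dots> = complex_of_real (1 / (2 * pi)) *
      (?a * integral {0..2*pi} (\<lambda>\<theta>. exp (\<i> * of_real (real_of_int (int j - int i - k) * \<theta>))))"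
    by (simp only: Henstock_Kurzweil_Integration.integral_mult_right)
  also have "\<dots> = (if int j - int i = k then ?a else 0)"
    unfolding integral_exp_int by simp
  finally show ?thesis .
qed



section \<open>Extraction of the diagonal sums\<close>

lemma l2t_coord:
  assumes "l2_tendsto s y"
  shows "(\<lambda>N. s N i) \<longlonglongrightarrow> y i"
proof -
  have y: "y \<in> l2" and s: "\<And>N. s N \<in> l2" and t: "(\<lambda>N. l2norm (vdiff (s N) y)) \<longlonglongrightarrow> 0"
    using assms unfolding l2_tendsto_def by auto
  have "cmod (s N i - y i) \<le> l2norm (vdiff (s N) y)" for N
    unfolding vdiff_def using coord_le[OF l2_diff(1)[OF s[of N] y], of i] by simp
  then have "(\<lambda>N. s N i - y i) \<longlonglongrightarrow> 0"
    by (intro Lim_null_comparison[OF _ t]) auto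
  then show ?thesis by (rule LIM_zero_cancel)
qed

lemma psum_ev: "(\<Sum>n<N. b n * Tnm n n (ev j) j) = (\<Sum>n<N. if n \<le> j then b n else 0)"
  by (rule sum.cong) (auto simp: Tnm_eq ev_def)

lemma psum_const: "N \<ge> Suc j \<Longrightarrow> (\<Sum>n<N. if n \<le> j then b n else 0) = (\<Sum>n<Suc j. b n)"
proof (induction N rule: dec_induct)
  case base then show ?case by (rule sum.cong) auto
next
  case (step N) then show ?case by simp
qed

lemma limit_psum:
  assumes "l2_tendsto (\<lambda>N i. \<Sum>n<N. b n * Tnm n n (ev j) i) y"
  shows "y j = (\<Sum>n<Suc j. b n)"
proof -
  have t: "(\<lambda>N. \<Sum>n<N. b n * Tnm n n (ev j) j) \<longlonglongrightarrow> y j"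
    using l2t_coord[OF assms, of j] by simp
  have "eventually (\<lambda>N. (\<Sum>n<N. b n * Tnm n n (ev j) j) = (\<Sum>n<Suc j. b n)) sequentially"
    unfolding eventually_sequentially psum_ev using psum_const by blast
  then have "(\<lambda>N. \<Sum>n<Suc j. b n) \<longlonglongrightarrow> y j" by (rule Lim_transform_eventually[OF t])
  then show ?thesis using LIMSEQ_unique tendsto_const by blast
qed

lemma diag_lower:
  assumes F: "F \<in> toep_til" and sf: "series_form b k (fourier_coeff F k)" and k: "k \<le> 0"
  shows "(\<Sum>n<Suc j. b n) = F 0 (ev j) (j + nat (-k))"
proof -
  define d where "d = nat (-k)"
  obtain y where y: "l2_tendsto (\<lambda>N i. \<Sum>n<N. b n * Tnm n n (ev j) i) y"
     "fourier_coeff F k (ev j) = Tnm d 0 y"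
    using sf k ev_l2(1)[of j] unfolding series_form_def d_def by auto
  have "fourier_coeff F k (ev j) (j + d) = y j" unfolding y(2) by (simp add: Tnm_eq)
  moreover have "fourier_coeff F k (ev j) (j + d) = F 0 (ev j) (j + d)"
    unfolding fourier_entry[OF F] using k by (simp add: d_def)
  ultimately show ?thesis using limit_psum[OF y(1)] d_def by simp
qed

lemma diag_upper:
  assumes F: "F \<in> toep_til" and sf: "series_form b k (fourier_coeff F k)" and k: "k > 0"
  shows "(\<Sum>n<Suc m. b n) = F 0 (ev (m + nat k)) m"
proof -
  define d where "d = nat k"
  have e: "Tnm 0 d (ev (m + d)) = ev m" by (auto simp: fun_eq_iff Tnm_eq ev_def)
  have "l2_tendsto (\<lambda>N i. \<Sum>n<N. b n * Tnm n n (Tnm 0 d (ev (m + d))) i) (fourier_coeff F k (ev (m + d)))"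
    using sf k ev_l2(1)[of "m + d"] unfolding series_form_def d_def[symmetric] by auto
  then have y: "l2_tendsto (\<lambda>N i. \<Sum>n<N. b n * Tnm n n (ev m) i) (fourier_coeff F k (ev (m + d)))"
    unfolding e .
  have "fourier_coeff F k (ev (m + d)) m = F 0 (ev (m + d)) m"
    unfolding fourier_entry[OF F] using k by (simp add: d_def)
  then show ?thesis using limit_psum[OF y] d_def by simp
qed

lemma sums_iff_diag:
  assumes F: "F \<in> toep_til" and sf: "\<And>k. series_form (\<beta> k) k (fourier_coeff F k)"
  shows "(\<forall>k. (\<beta> k) sums 0) \<longleftrightarrow>
    (\<forall>d. (\<lambda>j. F 0 (ev j) (j + d)) \<longlonglongrightarrow> 0 \<and> (\<lambda>j. F 0 (ev (j + d)) j) \<longlonglongrightarrow> 0)"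
proof -
  have s: "(\<beta> k) sums 0 \<longleftrightarrow> (\<lambda>j. \<Sum>n<Suc j. \<beta> k n) \<longlonglongrightarrow> 0" for k
    unfolding sums_def
  proof
    assume "(\<lambda>n. sum (\<beta> k) {..<n}) \<longlonglongrightarrow> 0"
    then show "(\<lambda>j. \<Sum>n<Suc j. \<beta> k n) \<longlonglongrightarrow> 0" by (rule LIMSEQ_Suc)
  next
    assume "(\<lambda>j. \<Sum>n<Suc j. \<beta> k n) \<longlonglongrightarrow> 0"
    then show "(\<lambda>n. sum (\<beta> k) {..<n}) \<longlonglongrightarrow> 0" by (rule LIMSEQ_imp_Suc)
  qed
  have lo: "(\<beta> (- int d)) sums 0 \<longleftrightarrow> (\<lambda>j. F 0 (ev j) (j + d)) \<longlonglongrightarrow> 0" for d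
  proof -
    have "(\<lambda>j. \<Sum>n<Suc j. \<beta> (- int d) n) = (\<lambda>j. F 0 (ev j) (j + d))"
    proof
      fix j show "(\<Sum>n<Suc j. \<beta> (- int d) n) = F 0 (ev j) (j + d)"
        using diag_lower[OF F sf, of "- int d" j] by simp
    qed
    then show ?thesis unfolding s by simp
  qed
  have up: "(\<beta> (int d)) sums 0 \<longleftrightarrow> (\<lambda>j. F 0 (ev (j + d)) j) \<longlonglongrightarrow> 0" if "d > 0" for d
  proof -
    have "(\<lambda>j. \<Sum>n<Suc j. \<beta> (int d) n) = (\<lambda>j. F 0 (ev (j + d)) j)"
    proof
      fix j show "(\<Sum>n<Suc j. \<beta> (int d) n) = F 0 (ev (j + d)) j"
        using diag_upper[OF F sf, of "int d" j] that by simp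
    qed
    then show ?thesis unfolding s by simp
  qed
  show ?thesis
  proof
    assume H: "\<forall>k. (\<beta> k) sums 0"
    show "\<forall>d. (\<lambda>j. F 0 (ev j) (j + d)) \<longlonglongrightarrow> 0 \<and> (\<lambda>j. F 0 (ev (j + d)) j) \<longlonglongrightarrow> 0"
    proof
      fix d
      show "(\<lambda>j. F 0 (ev j) (j + d)) \<longlonglongrightarrow> 0 \<and> (\<lambda>j. F 0 (ev (j + d)) j) \<longlonglongrightarrow> 0"
      proof (cases "d = 0")
        case True then show ?thesis using lo[of 0] H by simp
      next
        case False then show ?thesis using lo[of d] up[of d] H by simp
      qed
    qed
  next
    assume H: "\<forall>d. (\<lambda>j. F 0 (ev j) (j + d)) \<longlonglongrightarrow> 0 \<and> (\<lambda>j. F 0 (ev (j + d)) j) \<longlonglongrightarrow> 0"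
    show "\<forall>k. (\<beta> k) sums 0"
    proof
      fix k :: int
      show "(\<beta> k) sums 0"
      proof (cases "k \<le> 0")
        case True
        then have "k = - int (nat (-k))" by simp
        then show ?thesis using lo[of "nat (-k)"] H by auto
      next
        case False
        then have "k = int (nat k)" "nat k > 0" by auto
        then show ?thesis using up[of "nat k"] H by auto
      qed
    qed
  qed
qed




section \<open>Compact implies vanishing diagonals\<close>

lemma toeplitz_bop: "A \<in> toeplitz \<Longrightarrow> bounded_op A"
  by (simp add: toeplitz_def)

lemma toeplitz_approx:
  assumes "A \<in> toeplitz" "e > 0"
  obtains L where "opnorm (op_diff A (tp L)) < e"
  using assms toep_gen_tp unfolding toeplitz_def by blast

lemma tp_ev_zero: "\<exists>M. \<forall>j>M. tp L (ev j) i = 0"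
proof (induction L)
  case Nil then show ?case by simp
next
  case (Cons t L)
  obtain c a b where t: "t = (c,a,b)" by (cases t) auto
  obtain M where M: "\<forall>j>M. tp L (ev j) i = 0" using Cons by blast
  have "\<forall>j>max M (i + b). tp (t#L) (ev j) i = 0"
    using M by (auto simp: t tm_def ev_def)
  then show ?case by blast
qed

lemma row_decay:
  assumes A: "A \<in> toeplitz"
  shows "(\<lambda>j. A (ev j) i) \<longlonglongrightarrow> 0"
proof (rule LIMSEQ_I)
  fix r :: real assume r: "r > 0"
  obtain L where L: "opnorm (op_diff A (tp L)) < r / 2" using toeplitz_approx[OF A, of "r/2"] r by auto
  obtain M where M: "\<forall>j>M. tp L (ev j) i = 0" using tp_ev_zero by blast
  have "cmod (A (ev j) i - 0) < r" if "j \<ge> Suc M" for j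
  proof -
    have "cmod (A (ev j) i - tp L (ev j) i) \<le> r / 2 * l2norm (ev j)"
      by (rule approx_coord[OF toeplitz_bop[OF A] bop_tp L ev_l2(1)])
    then show ?thesis using M that r by (simp add: ev_l2(2))
  qed
  then show "\<exists>no. \<forall>n\<ge>no. norm (A (ev n) i - 0) < r" by blast
qed

lemma compact_norm_decay:
  assumes C: "compact_op A" and A: "A \<in> toeplitz"
  shows "(\<lambda>j. l2norm (A (ev j))) \<longlonglongrightarrow> 0"
proof (rule ccontr)
  have bA: "bounded_op A" using toeplitz_bop[OF A] .
  assume nt: "\<not> ?thesis"
  obtain r where r: "r > 0" and unb: "\<forall>no. \<exists>n\<ge>no. \<not> norm (l2norm (A (ev n)) - 0) < r"
    using nt LIMSEQ_I by metis
  define S where "S = {n. r \<le> l2norm (A (ev n))}"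
  have "infinite S"
    unfolding infinite_nat_iff_unbounded_le S_def
  proof (intro allI)
    fix m
    obtain n where n: "n \<ge> m" "\<not> norm (l2norm (A (ev n)) - 0) < r" using unb by blast
    have "0 \<le> l2norm (A (ev n))" by (rule l2norm_nonneg[OF bop_l2[OF bA ev_l2(1)]])
    then have "r \<le> l2norm (A (ev n))" using n(2) by simp
    then show "\<exists>n\<ge>m. n \<in> {n. r \<le> l2norm (A (ev n))}" using n(1) by blast
  qed
  then obtain s :: "nat \<Rightarrow> nat" where s: "strict_mono s" "\<And>n. s n \<in> S"
    using infinite_enumerate by blast
  have "(\<forall>j. (\<lambda>j. ev (s j)) j \<in> l2) \<and> (\<exists>M. \<forall>j. l2norm ((\<lambda>j. ev (s j)) j) \<le> M)"
    using ev_l2 by auto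
  moreover have H: "\<forall>xs. (\<forall>j. xs j \<in> l2) \<and> (\<exists>M. \<forall>j. l2norm (xs j) \<le> M) \<longrightarrow>
        (\<exists>(r::nat \<Rightarrow> nat) y. strict_mono r \<and> l2_tendsto (\<lambda>j. A (xs (r j))) y)"
    using C unfolding compact_op_def by blast
  ultimately have "\<exists>q y. strict_mono q \<and> l2_tendsto (\<lambda>j. A ((\<lambda>j. ev (s j)) (q j))) y"
    using H[rule_format, of "\<lambda>j. ev (s j)"] by blast
  then obtain q y where q: "strict_mono q" and ly: "l2_tendsto (\<lambda>j. A (ev (s (q j)))) y"
    by auto
  have y0: "y i = 0" for i
  proof -
    have "(\<lambda>j. A (ev (s (q j))) i) \<longlonglongrightarrow> y i" using l2t_coord[OF ly] .
    moreover have "((\<lambda>j. A (ev j) i) \<circ> s \<circ> q) \<longlonglongrightarrow> 0"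
      by (intro LIMSEQ_subseq_LIMSEQ row_decay A s(1) q)
    ultimately show ?thesis using LIMSEQ_unique by (auto simp: o_def)
  qed
  have "(\<lambda>j. l2norm (vdiff (A (ev (s (q j)))) y)) \<longlonglongrightarrow> 0" using ly unfolding l2_tendsto_def by blast
  moreover have "vdiff (A (ev (s (q j)))) y = A (ev (s (q j)))" for j
    by (auto simp: vdiff_def y0)
  ultimately have t: "(\<lambda>j. l2norm (A (ev (s (q j))))) \<longlonglongrightarrow> 0" by simp
  have "\<forall>n\<ge>0. r \<le> l2norm (A (ev (s (q n))))" using s(2) unfolding S_def by auto
  then have "r \<le> 0" using LIMSEQ_le_const[OF t] by blast
  then show False using r by simp
qed

lemma compact_diags:
  assumes C: "compact_op A" and A: "A \<in> toeplitz"
  shows "(\<lambda>j. A (ev j) (j + d)) \<longlonglongrightarrow> 0" "(\<lambda>j. A (ev (j + d)) j) \<longlonglongrightarrow> 0"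
proof -
  have bA: "bounded_op A" using toeplitz_bop[OF A] .
  have t: "(\<lambda>j. l2norm (A (ev j))) \<longlonglongrightarrow> 0" by (rule compact_norm_decay[OF C A])
  have "norm (A (ev j) (j + d)) \<le> l2norm (A (ev j))" for j
    by (rule coord_le[OF bop_l2[OF bA ev_l2(1)]])
  then show "(\<lambda>j. A (ev j) (j + d)) \<longlonglongrightarrow> 0"
    by (intro Lim_null_comparison[OF _ t]) auto
  have t2: "(\<lambda>j. l2norm (A (ev (j + d)))) \<longlonglongrightarrow> 0" using LIMSEQ_ignore_initial_segment[OF t, of d] .
  have "norm (A (ev (j + d)) j) \<le> l2norm (A (ev (j + d)))" for j
    by (rule coord_le[OF bop_l2[OF bA ev_l2(1)]])
  then show "(\<lambda>j. A (ev (j + d)) j) \<longlonglongrightarrow> 0"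
    by (intro Lim_null_comparison[OF _ t2]) auto
qed




section \<open>Vanishing diagonals imply compact: tail estimate\<close>

lemma tp_bound: fixes L :: "(complex \<times> nat \<times> nat) list" shows "\<exists>M. \<forall>t\<in>set L. fst (snd t) \<le> M \<and> snd (snd t) \<le> M"
proof (induction L)
  case Nil then show ?case by simp
next
  case (Cons t L)
  then obtain M where "\<forall>t\<in>set L. fst (snd t) \<le> M \<and> snd (snd t) \<le> M" by blast
  then have "\<forall>t'\<in>set (t#L). fst (snd t') \<le> M + fst (snd t) + snd (snd t) \<and>
      snd (snd t') \<le> M + fst (snd t) + snd (snd t)" by fastforce
  then show ?case by blast
qed

lemma tm_shift:
  assumes "fst (snd t) \<le> i"
  shows "tm t (Tnm n 0 y) (i + n) = tm t y i"
proof -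
  obtain c a b where t: "t = (c,a,b)" by (cases t) auto
  have a: "a \<le> i" using assms t by simp
  have "i + n + b - a - n = i + b - a" using a by simp
  then show ?thesis using a by (simp add: t tm_def Tnm_eq)
qed

lemma tp_shift:
  assumes "\<forall>t\<in>set L. fst (snd t) \<le> i"
  shows "tp L (Tnm n 0 y) (i + n) = tp L y i"
  using assms by (induction L) (auto simp: tm_shift)

lemma tp_local:
  assumes "\<forall>t\<in>set L. snd (snd t) \<le> M" "\<And>k. k \<le> i + M \<Longrightarrow> y k = z k"
  shows "tp L y i = tp L z i"
  using assms(1)
proof (induction L)
  case Nil then show ?case by simp
next
  case (Cons t L)
  obtain c a b where t: "t = (c,a,b)" by (cases t) auto
  have "b \<le> M" using Cons.prems t by simp
  then have "tm t y i = tm t z i" using assms(2) by (auto simp: t tm_def)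
  then show ?case using Cons by simp
qed

lemma bop_sum:
  fixes N :: nat
  assumes "bounded_op A" "\<And>j. j < N \<Longrightarrow> v j \<in> l2"
  shows "(\<lambda>k. \<Sum>j<N. c j * v j k) \<in> l2 \<and> A (\<lambda>k. \<Sum>j<N. c j * v j k) = (\<lambda>k. \<Sum>j<N. c j * A (v j) k)"
  using assms(2)
proof (induction N)
  case 0 then show ?case using l2_zero bop_zero[OF assms(1)] by simp
next
  case (Suc N)
  have IH: "(\<lambda>k. \<Sum>j<N. c j * v j k) \<in> l2" "A (\<lambda>k. \<Sum>j<N. c j * v j k) = (\<lambda>k. \<Sum>j<N. c j * A (v j) k)"
    using Suc by auto
  have vN: "v N \<in> l2" using Suc.prems by simp
  have e: "(\<lambda>k. \<Sum>j<Suc N. c j * v j k) = (\<lambda>k. 1 * (\<Sum>j<N. c j * v j k) + c N * v N k)" by simp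
  have "(\<lambda>k. 1 * (\<Sum>j<N. c j * v j k) + c N * v N k) \<in> l2"
    using l2_add(1)[OF l2_scale(1)[OF IH(1), of 1] l2_scale(1)[OF vN, of "c N"]] .
  moreover have "A (\<lambda>k. 1 * (\<Sum>j<N. c j * v j k) + c N * v N k) = (\<lambda>k. \<Sum>j<Suc N. c j * A (v j) k)"
    unfolding bop_lin[OF assms(1) IH(1) vN] IH(2) by simp
  ultimately show ?case unfolding e by simp
qed

lemma shift_fin:
  assumes "\<And>k. k \<ge> Ls \<Longrightarrow> y k = 0"
  shows "Tnm n 0 y = (\<lambda>k. \<Sum>j<Ls. y j * ev (j + n) k)"
proof
  fix k
  show "Tnm n 0 y k = (\<Sum>j<Ls. y j * ev (j + n) k)"
  proof (cases "n \<le> k")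
    case True
    have "(\<Sum>j<Ls. y j * ev (j + n) k) = (\<Sum>j<Ls. if j = k - n then y j else 0)"
      by (rule sum.cong) (use True in \<open>auto simp: ev_def\<close>)
    also have "\<dots> = (if k - n < Ls then y (k - n) else 0)" by (simp add: sum.delta')
    also have "\<dots> = y (k - n)" using assms[of "k - n"] by auto
    finally show ?thesis using True by (simp add: Tnm_eq)
  next
    case False
    then show ?thesis by (simp add: Tnm_eq ev_def)
  qed
qed

lemma L2_reindex_le:
  assumes "w \<in> l2"
  shows "L2_set (\<lambda>i. cmod (w (i + n))) {M..<R} \<le> l2norm w"
proof -
  have "L2_set (\<lambda>i. cmod (w (i + n))) {M..<R} = L2_set (\<lambda>k. cmod (w k)) ((\<lambda>i. i + n) ` {M..<R})"
    unfolding L2_set_def by (subst sum.reindex) (auto simp: inj_on_def)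
  also have "\<dots> \<le> l2norm w" by (rule l2_L2_le[OF assms]) auto
  finally show ?thesis .
qed

lemma L2_tri:
  "L2_set (\<lambda>i. cmod (f i)) S \<le> L2_set (\<lambda>i. cmod (f i - g i)) S + L2_set (\<lambda>i. cmod (g i)) S"
proof -
  have "L2_set (\<lambda>i. cmod (f i)) S \<le> L2_set (\<lambda>i. cmod (f i - g i) + cmod (g i)) S"
  proof (rule L2_set_mono)
    fix i show "cmod (f i) \<le> cmod (f i - g i) + cmod (g i)"
      using norm_triangle_ineq[of "f i - g i" "g i"] by simp
  qed auto
  also have "\<dots> \<le> L2_set (\<lambda>i. cmod (f i - g i)) S + L2_set (\<lambda>i. cmod (g i)) S"
    by (rule L2_set_triangle_ineq)
  finally show ?thesis .
qed

lemma tail_fin: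
  assumes bA: "bounded_op A"
    and D: "\<And>d. (\<lambda>j. A (ev j) (j + d)) \<longlonglongrightarrow> 0 \<and> (\<lambda>j. A (ev (j + d)) j) \<longlonglongrightarrow> 0"
    and L: "opnorm (op_diff A (tp L)) < e"
    and M: "\<forall>t\<in>set L. fst (snd t) \<le> M"
    and e0: "e > 0" and y: "y \<in> l2" and fin: "\<And>k. k \<ge> Ls \<Longrightarrow> y k = 0"
  shows "L2_set (\<lambda>i. cmod (tp L y i)) {M..<R} \<le> e * l2norm y"
proof -
  define z where "z n = Tnm n 0 y" for n
  have zl2: "z n \<in> l2" "l2norm (z n) \<le> l2norm y" for n unfolding z_def using Tnm_l2[OF y] by auto
  have bB: "bounded_op (tp L)" by (rule bop_tp)
  define lhs where "lhs = L2_set (\<lambda>i. cmod (tp L y i)) {M..<R}"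
  define g where "g n = L2_set (\<lambda>i. cmod (A (z n) (i + n))) {M..<R}" for n
  have bound: "lhs \<le> e * l2norm y + g n" for n
  proof -
    have "lhs = L2_set (\<lambda>i. cmod (tp L (z n) (i + n))) {M..<R}"
      unfolding lhs_def z_def
    proof (rule L2_set_cong)
      fix i assume "i \<in> {M..<R}"
      then have "\<forall>t\<in>set L. fst (snd t) \<le> i" using M by auto
      then show "cmod (tp L y i) = cmod (tp L (Tnm n 0 y) (i + n))" by (simp add: tp_shift)
    qed simp
    also have "\<dots> \<le> L2_set (\<lambda>i. cmod (tp L (z n) (i + n) - A (z n) (i + n))) {M..<R} + g n"
      unfolding g_def by (rule L2_tri)
    also have "L2_set (\<lambda>i. cmod (tp L (z n) (i + n) - A (z n) (i + n))) {M..<R} \<le> e * l2norm y"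
    proof -
      have w: "(\<lambda>k. A (z n) k - tp L (z n) k) \<in> l2"
        by (rule l2_diff(1)[OF bop_l2[OF bA zl2(1)] bop_l2[OF bB zl2(1)]])
      have "L2_set (\<lambda>i. cmod (tp L (z n) (i + n) - A (z n) (i + n))) {M..<R} =
          L2_set (\<lambda>i. cmod ((\<lambda>k. A (z n) k - tp L (z n) k) (i + n))) {M..<R}"
        by (rule L2_set_cong) (auto simp: norm_minus_commute)
      also have "\<dots> \<le> l2norm (\<lambda>k. A (z n) k - tp L (z n) k)" by (rule L2_reindex_le[OF w])
      also have "\<dots> \<le> e * l2norm (z n)" by (rule approx_bound[OF bA bB L zl2(1)])
      also have "\<dots> \<le> e * l2norm y" using zl2(2) e0 by simp
      finally show ?thesis .
    qed
    finally show ?thesis by simp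
  qed
  have gt: "g \<longlonglongrightarrow> 0"
  proof -
    have Az: "A (z n) = (\<lambda>k. \<Sum>j<Ls. y j * A (ev (j + n)) k)" for n
    proof -
      have "z n = (\<lambda>k. \<Sum>j<Ls. y j * ev (j + n) k)" unfolding z_def by (rule shift_fin[OF fin])
      moreover have "A (\<lambda>k. \<Sum>j<Ls. y j * ev (j + n) k) = (\<lambda>k. \<Sum>j<Ls. y j * A (ev (j + n)) k)"
        by (rule conjunct2[OF bop_sum[OF bA, of Ls "\<lambda>j. ev (j + n)" y, OF ev_l2(1)]])
      ultimately show ?thesis by simp
    qed
    have trm: "(\<lambda>n. A (ev (j + n)) (i + n)) \<longlonglongrightarrow> 0" for i j
    proof (cases "j \<le> i")
      case True
      define d where "d = i - j"
      have "(\<lambda>n. A (ev (n + j)) (n + j + d)) \<longlonglongrightarrow> 0"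
        using LIMSEQ_ignore_initial_segment[OF conjunct1[OF D[of d]], of j] .
      moreover have "(\<lambda>n. A (ev (n + j)) (n + j + d)) = (\<lambda>n. A (ev (j + n)) (i + n))"
        using True by (auto simp: d_def add.commute)
      ultimately show ?thesis by simp
    next
      case False
      define d where "d = j - i"
      have "(\<lambda>n. A (ev (n + i + d)) (n + i)) \<longlonglongrightarrow> 0"
        using LIMSEQ_ignore_initial_segment[OF conjunct2[OF D[of d]], of i] .
      moreover have "(\<lambda>n. A (ev (n + i + d)) (n + i)) = (\<lambda>n. A (ev (j + n)) (i + n))"
        using False by (auto simp: d_def add.commute)
      ultimately show ?thesis by simp
    qed
    have "(\<lambda>n. A (z n) (i + n)) \<longlonglongrightarrow> 0" for i
    proof -
      have "(\<lambda>n. \<Sum>j<Ls. y j * A (ev (j + n)) (i + n)) \<longlonglongrightarrow> (\<Sum>j<Ls. y j * 0)"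
        by (rule tendsto_sum, rule tendsto_mult[OF tendsto_const trm])
      then show ?thesis unfolding Az by simp
    qed
    then have "(\<lambda>n. cmod (A (z n) (i + n))) \<longlonglongrightarrow> 0" for i by (rule tendsto_norm_zero)
    then have "(\<lambda>n. \<Sum>i\<in>{M..<R}. cmod (A (z n) (i + n))) \<longlonglongrightarrow> (\<Sum>i\<in>{M..<R}. 0)"
      by (intro tendsto_sum) auto
    then have lim: "(\<lambda>n. \<Sum>i\<in>{M..<R}. cmod (A (z n) (i + n))) \<longlonglongrightarrow> 0" by simp
    have nb: "norm (g n) \<le> (\<Sum>i\<in>{M..<R}. cmod (A (z n) (i + n)))" for n
    proof -
      have "g n \<le> (\<Sum>i\<in>{M..<R}. \<bar>cmod (A (z n) (i + n))\<bar>)" unfolding g_def by (rule L2_set_le_sum_abs)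
      moreover have "g n \<ge> 0" unfolding g_def by (rule L2_set_nonneg)
      ultimately show ?thesis by simp
    qed
    have ev: "eventually (\<lambda>n. norm (g n) \<le> (\<Sum>i\<in>{M..<R}. cmod (A (z n) (i + n)))) sequentially"
      by (rule always_eventually) (use nb in blast)
    show ?thesis by (rule Lim_null_comparison[OF ev lim])
  qed
  have "(\<lambda>n. e * l2norm y + g n) \<longlonglongrightarrow> e * l2norm y + 0" by (rule tendsto_add[OF tendsto_const gt])
  moreover have "\<exists>N. \<forall>n\<ge>N. lhs \<le> e * l2norm y + g n" using bound by blast
  ultimately have "lhs \<le> e * l2norm y + 0" by (rule LIMSEQ_le_const)
  then show ?thesis by (simp add: lhs_def)
qed




lemma tail_gen:
  assumes bA: "bounded_op A"
    and D: "\<And>d. (\<lambda>j. A (ev j) (j + d)) \<longlonglongrightarrow> 0 \<and> (\<lambda>j. A (ev (j + d)) j) \<longlonglongrightarrow> 0"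
    and L: "opnorm (op_diff A (tp L)) < e"
    and M: "\<forall>t\<in>set L. fst (snd t) \<le> M \<and> snd (snd t) \<le> M"
    and e0: "e > 0" and y: "y \<in> l2"
  shows "L2_set (\<lambda>i. cmod (tp L y i)) {M..<R} \<le> e * l2norm y"
proof -
  define y' where "y' = (\<lambda>k. if k < R + M then y k else 0)"
  have B: "L2_set (\<lambda>i. cmod (y' i)) {..<N} \<le> l2norm y" for N
  proof -
    have "L2_set (\<lambda>i. cmod (y' i)) {..<N} \<le> L2_set (\<lambda>i. cmod (y i)) {..<N}"
      by (rule L2_set_mono) (auto simp: y'_def)
    also have "\<dots> \<le> l2norm y" by (rule l2_L2_le[OF y]) simp
    finally show ?thesis .
  qed
  have y'l2: "y' \<in> l2" "l2norm y' \<le> l2norm y" using l2_leI[OF B] by auto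
  have M1: "\<forall>t\<in>set L. fst (snd t) \<le> M" and M2: "\<forall>t\<in>set L. snd (snd t) \<le> M" using M by auto
  have "L2_set (\<lambda>i. cmod (tp L y i)) {M..<R} = L2_set (\<lambda>i. cmod (tp L y' i)) {M..<R}"
  proof (rule L2_set_cong)
    fix i assume i: "i \<in> {M..<R}"
    have "tp L y i = tp L y' i" by (rule tp_local[OF M2]) (use i in \<open>auto simp: y'_def\<close>)
    then show "cmod (tp L y i) = cmod (tp L y' i)" by simp
  qed simp
  also have "\<dots> \<le> e * l2norm y'"
    by (rule tail_fin[OF bA D L M1 e0 y'l2(1), of "R + M"]) (auto simp: y'_def)
  also have "\<dots> \<le> e * l2norm y" using y'l2(2) e0 by simp
  finally show ?thesis .
qed

lemma L2_split:
  fixes f :: "nat \<Rightarrow> real" and N M :: nat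
  shows "L2_set f {..<N} \<le> L2_set f {..<M} + L2_set f {M..<N}"
proof (cases "N \<le> M")
  case True
  have "(\<Sum>i<N. (f i)\<^sup>2) \<le> (\<Sum>i<M. (f i)\<^sup>2)" using True by (intro sum_mono2) auto
  then have "L2_set f {..<N} \<le> L2_set f {..<M}" unfolding L2_set_def by (rule real_sqrt_le_mono)
  then show ?thesis using L2_set_nonneg[of f "{M..<N}"] by linarith
next
  case False
  then have u: "{..<N} = {..<M} \<union> {M..<N}" by auto
  have "L2_set f {..<N} = sqrt ((\<Sum>i<M. (f i)\<^sup>2) + (\<Sum>i\<in>{M..<N}. (f i)\<^sup>2))"
    unfolding L2_set_def u by (subst sum.union_disjoint) auto
  also have "\<dots> \<le> sqrt (\<Sum>i<M. (f i)\<^sup>2) + sqrt (\<Sum>i\<in>{M..<N}. (f i)\<^sup>2)"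
    by (rule sqrt_add_le_add_sqrt) (auto intro: sum_nonneg)
  finally show ?thesis unfolding L2_set_def .
qed

lemma tp_tendsto:
  assumes "\<And>k. (\<lambda>j. ys j k) \<longlonglongrightarrow> 0"
  shows "(\<lambda>j. tp L (ys j) i) \<longlonglongrightarrow> 0"
proof (induction L)
  case Nil then show ?case by simp
next
  case (Cons t L)
  obtain c a b where t: "t = (c,a,b)" by (cases t) auto
  have "(\<lambda>j. tm t (ys j) i) \<longlonglongrightarrow> 0"
  proof (cases "a \<le> i")
    case True
    have "(\<lambda>j. c * ys j (i + b - a)) \<longlonglongrightarrow> c * 0" by (rule tendsto_mult[OF tendsto_const assms])
    then show ?thesis using True by (simp add: t tm_def)
  next
    case False then show ?thesis by (simp add: t tm_def)
  qed
  then have "(\<lambda>j. tm t (ys j) i + tp L (ys j) i) \<longlonglongrightarrow> 0 + 0" by (rule tendsto_add[OF _ Cons])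
  then show ?case by simp
qed

lemma core:
  assumes A: "A \<in> toeplitz"
    and D: "\<And>d. (\<lambda>j. A (ev j) (j + d)) \<longlonglongrightarrow> 0 \<and> (\<lambda>j. A (ev (j + d)) j) \<longlonglongrightarrow> 0"
    and ys: "\<And>j. ys j \<in> l2" "\<And>j. l2norm (ys j) \<le> K" "\<And>k. (\<lambda>j. ys j k) \<longlonglongrightarrow> 0"
  shows "(\<lambda>j. l2norm (A (ys j))) \<longlonglongrightarrow> 0"
proof (rule LIMSEQ_I)
  fix r :: real assume r: "r > 0"
  have bA: "bounded_op A" using A by (rule toeplitz_bop)
  have K0: "K \<ge> 0" using l2norm_nonneg[OF ys(1)[of 0]] ys(2)[of 0] by simp
  define e where "e = r / (2 * K + 3)"
  have e0: "e > 0" unfolding e_def using r K0 by simp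
  have er: "e * (2 * K + 1) < r"
  proof -
    have "e * (2 * K + 1) < e * (2 * K + 3)" using e0 by simp
    also have "\<dots> = r" unfolding e_def using K0 by simp
    finally show ?thesis .
  qed
  obtain L where L: "opnorm (op_diff A (tp L)) < e" using toeplitz_approx[OF A e0] by blast
  obtain M where M: "\<forall>t\<in>set L. fst (snd t) \<le> M \<and> snd (snd t) \<le> M" using tp_bound by blast
  have bB: "bounded_op (tp L)" by (rule bop_tp)
  define P where "P j = L2_set (\<lambda>i. cmod (tp L (ys j) i)) {..<M}" for j
  have Pt: "P \<longlonglongrightarrow> 0"
  proof -
    have "(\<lambda>j. cmod (tp L (ys j) i)) \<longlonglongrightarrow> 0" for i by (rule tendsto_norm_zero[OF tp_tendsto[OF ys(3)]])
    then have "(\<lambda>j. \<Sum>i<M. cmod (tp L (ys j) i)) \<longlonglongrightarrow> (\<Sum>i<M. 0)" by (intro tendsto_sum) auto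
    then have lim: "(\<lambda>j. \<Sum>i<M. cmod (tp L (ys j) i)) \<longlonglongrightarrow> 0" by simp
    have nb: "norm (P j) \<le> (\<Sum>i<M. cmod (tp L (ys j) i))" for j
    proof -
      have "P j \<le> (\<Sum>i<M. \<bar>cmod (tp L (ys j) i)\<bar>)" unfolding P_def by (rule L2_set_le_sum_abs)
      moreover have "P j \<ge> 0" unfolding P_def by (rule L2_set_nonneg)
      ultimately show ?thesis by simp
    qed
    have ev: "eventually (\<lambda>j. norm (P j) \<le> (\<Sum>i<M. cmod (tp L (ys j) i))) sequentially"
      by (rule always_eventually) (use nb in blast)
    show ?thesis by (rule Lim_null_comparison[OF ev lim])
  qed
  obtain no where no: "\<And>j. j \<ge> no \<Longrightarrow> norm (P j - 0) < e" using LIMSEQ_D[OF Pt e0] by blast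
  have "norm (l2norm (A (ys j)) - 0) < r" if j: "j \<ge> no" for j
  proof -
    let ?y = "ys j"
    have yl: "?y \<in> l2" by (rule ys(1))
    have Bl: "tp L ?y \<in> l2" by (rule bop_l2[OF bB yl])
    have dl: "(\<lambda>i. A ?y i - tp L ?y i) \<in> l2" by (rule l2_diff(1)[OF bop_l2[OF bA yl] Bl])
    have "l2norm (A ?y) = l2norm (\<lambda>i. (A ?y i - tp L ?y i) + tp L ?y i)" by simp
    also have "\<dots> \<le> l2norm (\<lambda>i. A ?y i - tp L ?y i) + l2norm (tp L ?y)" by (rule l2_add(2)[OF dl Bl])
    also have "l2norm (\<lambda>i. A ?y i - tp L ?y i) \<le> e * K"
      using approx_bound[OF bA bB L yl] ys(2)[of j] e0 by (meson mult_left_mono less_imp_le order_trans)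
    also have "l2norm (tp L ?y) \<le> P j + e * K"
    proof (rule l2_leI(2))
      fix N
      have "L2_set (\<lambda>i. cmod (tp L ?y i)) {..<N} \<le> P j + L2_set (\<lambda>i. cmod (tp L ?y i)) {M..<N}"
        unfolding P_def by (rule L2_split)
      also have "L2_set (\<lambda>i. cmod (tp L ?y i)) {M..<N} \<le> e * l2norm ?y"
        by (rule tail_gen[OF bA D L M e0 yl])
      also have "e * l2norm ?y \<le> e * K" using ys(2)[of j] e0 by simp
      finally show "L2_set (\<lambda>i. cmod (tp L ?y i)) {..<N} \<le> P j + e * K" by simp
    qed
    also have "P j < e" using no[OF j] L2_set_nonneg[of _ "{..<M}"] unfolding P_def by simp
    finally have "l2norm (A ?y) < e * (2 * K + 1)" by (simp add: algebra_simps)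
    then have "l2norm (A ?y) < r" using er by simp
    moreover have "l2norm (A ?y) \<ge> 0" by (rule l2norm_nonneg[OF bop_l2[OF bA yl]])
    ultimately show ?thesis by simp
  qed
  then show "\<exists>no. \<forall>n\<ge>no. norm (l2norm (A (ys n)) - 0) < r" by blast
qed




lemma compact_from_diag:
  assumes A: "A \<in> toeplitz"
    and D: "\<And>d. (\<lambda>j. A (ev j) (j + d)) \<longlonglongrightarrow> 0 \<and> (\<lambda>j. A (ev (j + d)) j) \<longlonglongrightarrow> 0"
  shows "compact_op A"
  unfolding compact_op_def
proof (intro conjI allI impI)
  have bA: "bounded_op A" using A by (rule toeplitz_bop)
  then show "bounded_op A" .
  fix xs :: "nat \<Rightarrow> vec"
  assume H: "(\<forall>j. xs j \<in> l2) \<and> (\<exists>M. \<forall>j. l2norm (xs j) \<le> M)"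
  then have xl: "\<And>j. xs j \<in> l2" by blast
  obtain M0 where M0: "\<And>j. l2norm (xs j) \<le> M0" using H by blast
  have cb: "cmod (xs j n) \<le> M0" for j n using coord_le[OF xl, of j n] M0[of j] by simp
  let ?P = "\<lambda>n s. convergent (\<lambda>k. xs (s k) n)"
  interpret nat: subseqs ?P
  proof (unfold subseqs_def, intro allI impI)
    fix n :: nat and s :: "nat \<Rightarrow> nat" assume s: "strict_mono s"
    have "bounded (range (\<lambda>k. xs (s k) n))"
      unfolding bounded_iff using cb by blast
    then obtain l r' where r': "strict_mono r'" "((\<lambda>k. xs (s k) n) \<circ> r') \<longlonglongrightarrow> l"
      using bounded_imp_convergent_subsequence by blast
    then have "convergent (\<lambda>k. xs ((s \<circ> r') k) n)" by (auto simp: convergent_def o_def)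
    then show "\<exists>r'. strict_mono r' \<and> convergent (\<lambda>k. xs ((s \<circ> r') k) n)" using r'(1) by blast
  qed
  define d where "d = nat.diagseq"
  have sd: "strict_mono d" unfolding d_def by (rule nat.subseq_diagseq)
  have cv: "convergent (\<lambda>k. xs (d k) n)" for n
  proof -
    have "?P n (nat.diagseq \<circ> ((+) (Suc n)))"
    proof (rule nat.diagseq_holds)
      fix r s :: "nat \<Rightarrow> nat" and n :: nat
      assume a: "strict_mono r" "convergent (\<lambda>k. xs (s k) n)"
      have "convergent ((\<lambda>k. xs (s k) n) \<circ> r)" by (rule convergent_subseq_convergent[OF a(2) a(1)])
      then show "convergent (\<lambda>k. xs ((s \<circ> r) k) n)" by (simp add: o_def)
    qed
    then obtain l where "(\<lambda>k. xs (d (Suc n + k)) n) \<longlonglongrightarrow> l" by (auto simp: convergent_def d_def)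
    then have "(\<lambda>k. xs (d (k + Suc n)) n) \<longlonglongrightarrow> l" by (simp add: add.commute)
    then have "(\<lambda>k. xs (d k) n) \<longlonglongrightarrow> l" by (rule LIMSEQ_offset)
    then show ?thesis by (auto simp: convergent_def)
  qed
  define z where "z n = lim (\<lambda>k. xs (d k) n)" for n
  have zt: "(\<lambda>k. xs (d k) n) \<longlonglongrightarrow> z n" for n unfolding z_def using cv convergent_LIMSEQ_iff by blast
  have zB: "L2_set (\<lambda>i. cmod (z i)) {..<N} \<le> M0" for N
  proof -
    have "(\<lambda>k. sqrt (\<Sum>i<N. (cmod (xs (d k) i))\<^sup>2)) \<longlonglongrightarrow> sqrt (\<Sum>i<N. (cmod (z i))\<^sup>2)"
      by (intro tendsto_intros zt)
    moreover have "\<exists>N'. \<forall>k\<ge>N'. sqrt (\<Sum>i<N. (cmod (xs (d k) i))\<^sup>2) \<le> M0"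
    proof (intro exI allI impI)
      fix k
      have "sqrt (\<Sum>i<N. (cmod (xs (d k) i))\<^sup>2) = L2_set (\<lambda>i. cmod (xs (d k) i)) {..<N}" by (simp add: L2_eq)
      also have "\<dots> \<le> l2norm (xs (d k))" by (rule l2_L2_le[OF xl]) simp
      also have "\<dots> \<le> M0" by (rule M0)
      finally show "sqrt (\<Sum>i<N. (cmod (xs (d k) i))\<^sup>2) \<le> M0" .
    qed
    ultimately have "sqrt (\<Sum>i<N. (cmod (z i))\<^sup>2) \<le> M0" by (rule LIMSEQ_le_const2)
    then show ?thesis by (simp add: L2_eq)
  qed
  have zl: "z \<in> l2" "l2norm z \<le> M0" using l2_leI[OF zB] by auto
  define ys where "ys k = (\<lambda>i. xs (d k) i - z i)" for k
  have ysl: "ys k \<in> l2" for k unfolding ys_def by (rule l2_diff(1)[OF xl zl(1)])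
  have ysn: "l2norm (ys k) \<le> M0 + M0" for k
    unfolding ys_def using l2_diff(2)[OF xl[of "d k"] zl(1)] M0[of "d k"] zl(2) by simp
  have yst: "(\<lambda>k. ys k i) \<longlonglongrightarrow> 0" for i
    unfolding ys_def using zt[of i] by (simp add: LIM_zero)
  have ct: "(\<lambda>k. l2norm (A (ys k))) \<longlonglongrightarrow> 0" by (rule core[OF A D ysl ysn yst])
  have "A (ys k) = vdiff (A (xs (d k))) (A z)" for k
    unfolding ys_def vdiff_def by (rule bop_diff[OF bA xl zl(1)])
  then have "l2_tendsto (\<lambda>k. A (xs (d k))) (A z)"
    unfolding l2_tendsto_def using ct bop_l2[OF bA zl(1)] bop_l2[OF bA xl] by simp
  then show "\<exists>(r::nat \<Rightarrow> nat) y. strict_mono r \<and> l2_tendsto (\<lambda>j. A (xs (r j))) y" using sd by blast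
qed

theorem theorem3:
  fixes A :: oper and \<beta> :: "int \<Rightarrow> nat \<Rightarrow> complex"
  assumes "A \<in> toeplitz"
    and "series_coeffs A \<beta>"
  shows "compact_op A \<longleftrightarrow> (\<forall>k. (\<beta> k) sums 0)"
proof -
  obtain F where F: "F \<in> toep_til" "\<And>x. x \<in> l2 \<Longrightarrow> F 0 x = A x"
    "\<And>k. series_form (\<beta> k) k (fourier_coeff F k)"
    using assms(2) unfolding series_coeffs_def by blast
  have FA: "F 0 (ev j) = A (ev j)" for j using F(2)[OF ev_l2(1)] .
  have S: "(\<forall>k. (\<beta> k) sums 0) \<longleftrightarrow>
      (\<forall>d. (\<lambda>j. A (ev j) (j + d)) \<longlonglongrightarrow> 0 \<and> (\<lambda>j. A (ev (j + d)) j) \<longlonglongrightarrow> 0)"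
    using sums_iff_diag[OF F(1) F(3)] unfolding FA .
  show ?thesis
  proof
    assume C: "compact_op A"
    show "\<forall>k. (\<beta> k) sums 0" unfolding S using compact_diags[OF C assms(1)] by blast
  next
    assume "\<forall>k. (\<beta> k) sums 0"
    then have "\<forall>d. (\<lambda>j. A (ev j) (j + d)) \<longlonglongrightarrow> 0 \<and> (\<lambda>j. A (ev (j + d)) j) \<longlonglongrightarrow> 0" using S by blast
    then show "compact_op A" using compact_from_diag[OF assms(1)] by blast
  qed
qed


end
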